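(* Let $X$ be a Polish space, $n\ge1$, $\mu\in\mathcal M_f(X)$ with $\mu(X)=n$, and let ${\mathbf T}$ be a thinning kernel of type 1 with normalization $Z$. Then for every non-negative measurable function $\phi$ on $\mathcal M_f(X)$, $${\mathbf T}_\mu\big(\phi\,1_{\{\zeta_X=n-1\}}\big)=\int\frac{Z_\mu}{Z_{\mu-\delta_x}}\,{\mathbf T}_{\mu-\delta_x}\big(\phi\,1_{\{\zeta_X=n-1\}}\big)\,\mu(\mathrm dx).$$
   Context: $\mathcal M_f(X)$ denotes the set of finite counting measures on $X$. For $\mu\in\mathcal M_f(X)$ with an atom at $x$, $\mu-\delta_x$ is $\mu$ with one atom at $x$ removed. $\zeta_X(\eta)=\eta(X)$ is the total number of points. $\mu^{-[n]}$ is the $n$-th falling factorial measure of $\mu$, defined by $\int g\,\mathrm d\mu^{-[n]}=\int\cdots\int g(x_1,\dots,x_n)(\mu-\delta_{x_1}-\dots-\delta_{x_{n-1}})(\mathrm dx_n)\cdots\mu(\mathrm dx_1)$. Write $\delta_{\mathbf x}=\delta_{x_1}+\dots+\delta_{x_n}$. A thinning kernel of type 1 is a stochastic kernel of the form ${\mathbf T}_\mu(\phi)=Z_\mu\sum_{m\ge0}\frac1{m!}\int\phi(\delta_{\mathbf x})\,t({\mathbf x})\,\mu^{-[m]}(\mathrm d{\mathbf x})$. Here $t\ge0$ is a symmetric measurable function on $\bigcup_mX^m$ (for $m=0$ a non-negative number) not depending on $\mu$, and $Z_\mu^{-1}=\sum_m\frac1{m!}\int t\,\mathrm d\mu^{-[m]}\in(0,\infty)$.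 *)

theory Defs
  imports "HOL-Analysis.Analysis" "HOL-Library.Multiset"
begin

text \<open>Finite counting measures on X are represented as multisets over X.
  Integration against a finite counting measure mu is the sum over its atoms
  (with multiplicity).  ffint mu m g is the integral of g against the m-th
  falling factorial measure of mu, following the iterated-integral definition:
  outer integral over x1 against mu, next over x2 against mu - delta x1, etc.\<close>

primrec ffint :: "nat \<Rightarrow> 'a multiset \<Rightarrow> ('a list \<Rightarrow> 'b::comm_monoid_add) \<Rightarrow> 'b" where
  "ffint 0 \<mu> g = g []"
| "ffint (Suc m) \<mu> g = sum_mset (image_mset (\<lambda>x. ffint m (\<mu> - {#x#}) (\<lambda>xs. g (x # xs))) \<mu>)"

definition zeta :: "'a multiset \<Rightarrow> nat" where
  "zeta \<eta> = size \<eta>"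

definition Zinv :: "('a list \<Rightarrow> real) \<Rightarrow> 'a multiset \<Rightarrow> ennreal" where
  "Zinv t \<mu> = (\<Sum>m. ffint m \<mu> (\<lambda>xs. ennreal (t xs)) / of_nat (fact m))"

definition Znorm :: "('a list \<Rightarrow> real) \<Rightarrow> 'a multiset \<Rightarrow> ennreal" where
  "Znorm t \<mu> = inverse (Zinv t \<mu>)"

definition thinT :: "('a list \<Rightarrow> real) \<Rightarrow> 'a multiset \<Rightarrow> ('a multiset \<Rightarrow> ennreal) \<Rightarrow> ennreal" where
  "thinT t \<mu> \<phi> = Znorm t \<mu> *
     (\<Sum>m. ffint m \<mu> (\<lambda>xs. \<phi> (mset xs) * ennreal (t xs)) / of_nat (fact m))"

definition thinning_weight :: "('a list \<Rightarrow> real) \<Rightarrow> bool" where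
  "thinning_weight t \<longleftrightarrow>
     (\<forall>xs. 0 \<le> t xs) \<and>
     (\<forall>xs ys. mset xs = mset ys \<longrightarrow> t xs = t ys) \<and>
     (\<forall>\<mu>. 0 < Zinv t \<mu> \<and> Zinv t \<mu> < \<infinity>)"

end

theory Submission
  imports Defs
begin

lemma ffint_cong:
  "(\<And>xs. length xs = m \<Longrightarrow> g xs = g' xs) \<Longrightarrow> ffint m \<mu> g = ffint m \<mu> g'"
proof (induction m arbitrary: \<mu> g g')
  case 0 then show ?case by simp
next
  case (Suc m)
  show ?case
    by (simp, rule arg_cong[where f=sum_mset], rule image_mset_cong, rule Suc.IH)
       (use Suc.prems in auto)
qed

lemma ffint_zero: "ffint m \<mu> (\<lambda>xs. 0) = 0"
  by (induction m arbitrary: \<mu>) auto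

lemma double_swap:
  fixes F :: "'a \<Rightarrow> 'a \<Rightarrow> 'b::comm_monoid_add"
  shows "sum_mset (image_mset (\<lambda>x. sum_mset (image_mset (\<lambda>y. F x y) (\<mu> - {#x#}))) \<mu>)
 = sum_mset (image_mset (\<lambda>x. sum_mset (image_mset (\<lambda>y. F y x) (\<mu> - {#x#}))) \<mu>)"
proof (induction \<mu>)
  case empty then show ?case by simp
next
  case (add a \<mu>)
  have e: "\<And>x. x \<in># \<mu> \<Longrightarrow> add_mset a \<mu> - {#x#} = add_mset a (\<mu> - {#x#})"
    by (simp add: diff_union_swap2)
  have "sum_mset (image_mset (\<lambda>x. sum_mset (image_mset (\<lambda>y. G x y) (add_mset a \<mu> - {#x#}))) \<mu>)
    = sum_mset (image_mset (\<lambda>x. G x a + sum_mset (image_mset (\<lambda>y. G x y) (\<mu> - {#x#}))) \<mu>)" for G :: "'a \<Rightarrow> 'a \<Rightarrow> 'b"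
    by (rule arg_cong[where f=sum_mset], rule image_mset_cong) (simp add: e)
  then show ?case using add.IH
    by (simp add: sum_mset.distrib add.commute add.left_commute)
qed

lemma ffint_remove:
  "size \<mu> = Suc m \<Longrightarrow> ffint m \<mu> g = sum_mset (image_mset (\<lambda>x. ffint m (\<mu> - {#x#}) g) \<mu>)"
proof (induction m arbitrary: \<mu> g)
  case 0
  then obtain a where "\<mu> = {#a#}" by (metis One_nat_def size_1_singleton_mset)
  then show ?case by simp
next
  case (Suc m)
  have sz: "\<And>x. x \<in># \<mu> \<Longrightarrow> size (\<mu> - {#x#}) = Suc m"
    using Suc.prems by (simp add: size_Diff_singleton)
  have "ffint (Suc m) \<mu> g = sum_mset (image_mset (\<lambda>x. sum_mset (image_mset
      (\<lambda>y. ffint m (\<mu> - {#x#} - {#y#}) (\<lambda>xs. g (x # xs))) (\<mu> - {#x#}))) \<mu>)"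
  proof -
    have st: "x \<in># \<mu> \<Longrightarrow> ffint m (\<mu> - {#x#}) (\<lambda>xs. g (x # xs)) = sum_mset (image_mset
      (\<lambda>y. ffint m (\<mu> - {#x#} - {#y#}) (\<lambda>xs. g (x # xs))) (\<mu> - {#x#}))" for x
      using Suc.IH[OF sz, of x] by blast
    show ?thesis by (simp only: ffint.simps, rule arg_cong[where f=sum_mset], rule image_mset_cong, rule st)
  qed
  also have "\<dots> = sum_mset (image_mset (\<lambda>x. sum_mset (image_mset
      (\<lambda>y. ffint m (\<mu> - {#y#} - {#x#}) (\<lambda>xs. g (y # xs))) (\<mu> - {#x#}))) \<mu>)"
    by (rule double_swap[where F = "\<lambda>x y. ffint m (\<mu> - {#x#} - {#y#}) (\<lambda>xs. g (x # xs))"])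
  also have "\<dots> = sum_mset (image_mset (\<lambda>x. ffint (Suc m) (\<mu> - {#x#}) g) \<mu>)"
    by (simp add: diff_right_commute add_mset_commute)
  finally show ?case .
qed

lemma sum_single_ind:
  fixes h :: "'a list \<Rightarrow> ennreal"
  shows "(\<Sum>m. ffint m \<nu> (\<lambda>xs. \<phi> (mset xs) * indicator {\<eta>. zeta \<eta> = k} (mset xs) * h xs) / of_nat (fact m))
    = ffint k \<nu> (\<lambda>xs. \<phi> (mset xs) * h xs) / of_nat (fact k)"
proof -
  have "ffint m \<nu> (\<lambda>xs. \<phi> (mset xs) * indicator {\<eta>. zeta \<eta> = k} (mset xs) * h xs)
     = (if m = k then ffint k \<nu> (\<lambda>xs. \<phi> (mset xs) * h xs) else 0)" for m
  proof (cases "m = k")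
    case True then show ?thesis
      by (simp, intro ffint_cong) (simp add: zeta_def indicator_def)
  next
    case False
    have "ffint m \<nu> (\<lambda>xs. \<phi> (mset xs) * indicator {\<eta>. zeta \<eta> = k} (mset xs) * h xs) = ffint m \<nu> (\<lambda>xs. 0)"
      by (intro ffint_cong) (use False in \<open>simp add: zeta_def indicator_def\<close>)
    then show ?thesis using False by (simp add: ffint_zero)
  qed
  then have "(\<lambda>m. ffint m \<nu> (\<lambda>xs. \<phi> (mset xs) * indicator {\<eta>. zeta \<eta> = k} (mset xs) * h xs) / of_nat (fact m))
     = (\<lambda>m. if m = k then ffint k \<nu> (\<lambda>xs. \<phi> (mset xs) * h xs) / of_nat (fact k) else 0)"
    by (auto intro!: ext)
  then show ?thesis using sums_unique[OF sums_single[of k "\<lambda>_. ffint k \<nu> (\<lambda>xs. \<phi> (mset xs) * h xs) / of_nat (fact k)"]]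
    by simp
qed

lemma ennreal_inv_facts:
  fixes z :: ennreal
  assumes "0 < z" "z < top"
  shows "inverse (inverse z) = z" "z * inverse z = 1"
proof -
  obtain r where r: "z = ennreal r" "0 < r" using assms
    by (cases z rule: ennreal_cases) auto
  show "inverse (inverse z) = z" using r by (simp add: inverse_ennreal)
  show "z * inverse z = 1" using r by (simp add: inverse_ennreal ennreal_mult[symmetric])
qed

theorem mainTheorem6:
  fixes t :: "'a::polish_space list \<Rightarrow> real"
    and \<mu> :: "'a multiset"
    and n :: nat
    and \<phi> :: "'a multiset \<Rightarrow> ennreal"
  assumes "n \<ge> 1"
    and "size \<mu> = n"
    and "thinning_weight t"
  shows "thinT t \<mu> (\<lambda>\<eta>. \<phi> \<eta> * indicator {\<eta>. zeta \<eta> = n - 1} \<eta>)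
       = sum_mset (image_mset (\<lambda>x. Znorm t \<mu> / Znorm t (\<mu> - {#x#})
            * thinT t (\<mu> - {#x#}) (\<lambda>\<eta>. \<phi> \<eta> * indicator {\<eta>. zeta \<eta> = n - 1} \<eta>)) \<mu>)"
proof -
  define g where "g = (\<lambda>xs. \<phi> (mset xs) * ennreal (t xs))"
  define c :: ennreal where "c = of_nat (fact (n - 1))"
  have T: "thinT t \<nu> (\<lambda>\<eta>. \<phi> \<eta> * indicator {\<eta>. zeta \<eta> = n - 1} \<eta>) = Znorm t \<nu> * (ffint (n - 1) \<nu> g / c)" for \<nu>
    unfolding thinT_def g_def c_def using sum_single_ind[of \<nu> \<phi> "n - 1" "\<lambda>xs. ennreal (t xs)"]
    by simp
  have Z: "0 < Zinv t \<nu>" "Zinv t \<nu> < top" for \<nu>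
    using assms(3) unfolding thinning_weight_def by auto
  have canc: "Znorm t \<mu> / Znorm t \<nu> * (Znorm t \<nu> * s) = Znorm t \<mu> * s" for \<nu> s
  proof -
    have "Znorm t \<mu> / Znorm t \<nu> * (Znorm t \<nu> * s) = Znorm t \<mu> * (Zinv t \<nu> * inverse (Zinv t \<nu>)) * s"
      unfolding Znorm_def divide_ennreal_def ennreal_inv_facts(1)[OF Z[of \<nu>]] by (metis mult.assoc)
    also have "Zinv t \<nu> * inverse (Zinv t \<nu>) = 1"
      using ennreal_inv_facts[OF Z[of \<nu>]] by simp
    finally show ?thesis by simp
  qed
  have sz: "size \<mu> = Suc (n - 1)" using assms by simp
  show ?thesis
    unfolding T unfolding canc unfolding ffint_remove[OF sz, of g] divide_ennreal_def
    by (simp only: sum_mset_distrib_left sum_mset_distrib_right)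
qed

end
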